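(* Let $a>0$. If $\phi\in\mathcal D[0,\infty)$ is absolutely continuous on every compact interval $[0,T]$, then so is $\Lambda_a(\phi)$.
   Context: $\mathcal D[0,\infty)$ is the space of right-continuous functions $[0,\infty)\to\mathbb R$ with left limits. Notation: $x^+=\max(x,0)$, $x\wedge y=\min(x,y)$. For $a>0$, $\Lambda_a(\phi)(t)=\phi(t)-\sup_{s\in[0,t]}\big[(\phi(s)-a)^+\wedge\inf_{u\in[s,t]}\phi(u)\big]$. *)

theory Defs
  imports "HOL-Analysis.Analysis"
begin

text \<open>Cadlag functions on [0,infinity): right-continuous at every t >= 0,
  with left limits at every t > 0. Values at negative arguments are irrelevant.\<close>
definition cadlag :: "(real \<Rightarrow> real) \<Rightarrow> bool" where
  "cadlag f \<longleftrightarrow> (\<forall>t\<ge>0. (f \<longlongrightarrow> f t) (at_right t)) \<and>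
                  (\<forall>t>0. \<exists>l. (f \<longlongrightarrow> l) (at_left t))"

definition abs_cont_on :: "real \<Rightarrow> real \<Rightarrow> (real \<Rightarrow> real) \<Rightarrow> bool" where
  "abs_cont_on S T f \<longleftrightarrow>
     (\<forall>\<epsilon>>0. \<exists>\<delta>>0. \<forall>(n::nat) (a::nat \<Rightarrow> real) (b::nat \<Rightarrow> real).
        (\<forall>i<n. S \<le> a i \<and> a i \<le> b i \<and> b i \<le> T) \<and>
        (\<forall>i<n. \<forall>j<n. i \<noteq> j \<longrightarrow> b i \<le> a j \<or> b j \<le> a i) \<and>
        (\<Sum>i<n. b i - a i) < \<delta>
        \<longrightarrow> (\<Sum>i<n. \<bar>f (b i) - f (a i)\<bar>) < \<epsilon>)"

definition Lambda :: "real \<Rightarrow> (real \<Rightarrow> real) \<Rightarrow> real \<Rightarrow> real" where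
  "Lambda a \<phi> t = \<phi> t - (SUP s\<in>{0..t}. min (max (\<phi> s - a) 0) (INF u\<in>{s..t}. \<phi> u))"

end

theory Submission
  imports Defs
begin

lemma psi_diff:
  fixes \<phi> :: "real \<Rightarrow> real"
  assumes cont: "continuous_on {0..t} \<phi>" and s: "0 \<le> s" "s \<le> t"
    and M: "\<forall>u\<in>{s..t}. \<forall>v\<in>{s..t}. \<bar>\<phi> u - \<phi> v\<bar> \<le> M"
  shows "\<bar>(SUP r\<in>{0..t}. min (max (\<phi> r - a) 0) (INF u\<in>{r..t}. \<phi> u))
          - (SUP r\<in>{0..s}. min (max (\<phi> r - a) 0) (INF u\<in>{r..s}. \<phi> u))\<bar> \<le> M"
proof -
  define g where "g = (\<lambda>x r. min (max (\<phi> r - a) 0) (INF u\<in>{r..x}. \<phi> u))"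
  have M0: "M \<ge> 0" using M s by force
  have bdd: "bdd_below (\<phi> ` {r..x})" if "0 \<le> r" "x \<le> t" for r x
  proof -
    have "compact (\<phi> ` {r..x})"
      by (rule compact_continuous_image[OF continuous_on_subset[OF cont]]) (use that in auto)
    thus ?thesis by (simp add: bounded_imp_bdd_below compact_imp_bounded)
  qed
  have I1: "(INF u\<in>{r..x}. \<phi> u) \<le> \<phi> w" if "0 \<le> r" "x \<le> t" "w \<in> {r..x}" for r x w
    using cINF_lower[OF bdd[OF that(1,2)] that(3)] .
  have I2: "c \<le> (INF u\<in>{r..x}. \<phi> u)" if "r \<le> x" "\<forall>u\<in>{r..x}. c \<le> \<phi> u" for r x c
    using that by (intro cINF_greatest) auto
  have gle: "g x r \<le> \<phi> x" if "0 \<le> r" "r \<le> x" "x \<le> t" for r x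
    using I1[of r x x] that unfolding g_def by auto
  have bddS: "bdd_above (g x ` {0..x})" if "x \<le> t" for x
    using gle that by (intro bdd_aboveI2[where M="\<phi> x"]) auto
  have mono: "g t r \<le> g s r" if "0 \<le> r" "r \<le> s" for r
  proof -
    have "(INF u\<in>{r..t}. \<phi> u) \<le> (INF u\<in>{r..s}. \<phi> u)"
      using that s by (intro I2) (auto intro!: I1)
    thus ?thesis unfolding g_def by auto
  qed
  have lip: "g s r \<le> g t r + M" if "0 \<le> r" "r \<le> s" for r
  proof -
    have "(INF u\<in>{r..s}. \<phi> u) - M \<le> (INF u\<in>{r..t}. \<phi> u)"
    proof (rule I2)
      show "r \<le> t" using that s by auto
      show "\<forall>u\<in>{r..t}. (INF u\<in>{r..s}. \<phi> u) - M \<le> \<phi> u"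
      proof
        fix u assume u: "u \<in> {r..t}"
        show "(INF u\<in>{r..s}. \<phi> u) - M \<le> \<phi> u"
        proof (cases "u \<le> s")
          case True
          have "(INF u\<in>{r..s}. \<phi> u) \<le> \<phi> u" using I1[of r s u] that s u True by auto
          then show ?thesis using M0 by linarith
        next
          case False
          have "(INF u\<in>{r..s}. \<phi> u) \<le> \<phi> s" using I1[of r s s] that s by auto
          moreover have "\<bar>\<phi> s - \<phi> u\<bar> \<le> M" using M u False s by auto
          ultimately show ?thesis by linarith
        qed
      qed
    qed
    thus ?thesis unfolding g_def using M0 by (auto simp: min_def max_def)
  qed
  have A: "(SUP r\<in>{0..s}. g s r) \<le> (SUP r\<in>{0..t}. g t r) + M"
  proof (rule cSUP_least)
    show "{0..s} \<noteq> {}" using s by auto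
    fix r assume r: "r \<in> {0..s}"
    have "g t r \<le> (SUP r\<in>{0..t}. g t r)" using r s by (intro cSUP_upper bddS) auto
    thus "g s r \<le> (SUP r\<in>{0..t}. g t r) + M" using lip[of r] r by auto
  qed
  have gss: "g s s = min (max (\<phi> s - a) 0) (\<phi> s)" unfolding g_def by simp
  have Bs: "g s s \<le> (SUP r\<in>{0..s}. g s r)" using s by (intro cSUP_upper bddS) auto
  have B: "(SUP r\<in>{0..t}. g t r) \<le> (SUP r\<in>{0..s}. g s r) + M"
  proof (rule cSUP_least)
    show "{0..t} \<noteq> {}" using s by auto
    fix r assume r: "r \<in> {0..t}"
    show "g t r \<le> (SUP r\<in>{0..s}. g s r) + M"
    proof (cases "r \<le> s")
      case True
      have "g s r \<le> (SUP r\<in>{0..s}. g s r)" using r True s by (intro cSUP_upper bddS) auto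
      then show ?thesis using mono[of r] r True M0 by auto
    next
      case False
      have "(INF u\<in>{r..t}. \<phi> u) \<le> \<phi> r" using I1[of r t r] r False s by auto
      hence "g t r \<le> min (max (\<phi> r - a) 0) (\<phi> r)" unfolding g_def by auto
      moreover have "\<bar>\<phi> r - \<phi> s\<bar> \<le> M" using M r False s by auto
      ultimately show ?thesis using Bs gss by (auto simp: min_def max_def split: if_splits)
    qed
  qed
  from A B show ?thesis unfolding g_def by linarith
qed

lemma Lambda_diff:
  fixes \<phi> :: "real \<Rightarrow> real"
  assumes cont: "continuous_on {0..t} \<phi>" and s: "0 \<le> s" "s \<le> t"
    and M: "\<forall>u\<in>{s..t}. \<forall>v\<in>{s..t}. \<bar>\<phi> u - \<phi> v\<bar> \<le> M"
  shows "\<bar>Lambda a \<phi> t - Lambda a \<phi> s\<bar> \<le> 2 * M"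
proof -
  have "\<bar>\<phi> t - \<phi> s\<bar> \<le> M" using M s by auto
  with psi_diff[OF cont s M, of a] show ?thesis unfolding Lambda_def by linarith
qed

lemma ac_cont:
  assumes "abs_cont_on 0 T f"
  shows "continuous_on {0..T} f"
  unfolding continuous_on_iff
proof (intro ballI allI impI)
  fix x e :: real assume x: "x \<in> {0..T}" and e: "0 < e"
  have X: "\<exists>d>0. \<forall>(n::nat) (a::nat \<Rightarrow> real) (b::nat \<Rightarrow> real). (\<forall>i<n. 0 \<le> a i \<and> a i \<le> b i \<and> b i \<le> T) \<and>
        (\<forall>i<n. \<forall>j<n. i \<noteq> j \<longrightarrow> b i \<le> a j \<or> b j \<le> a i) \<and>
        (\<Sum>i<n. b i - a i) < d
        \<longrightarrow> (\<Sum>i<n. \<bar>f (b i) - f (a i)\<bar>) < e"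
    using mp[OF spec[OF assms[unfolded abs_cont_on_def], of e] e] .
  obtain d where dH: "d > 0 \<and> (\<forall>(n::nat) (a::nat \<Rightarrow> real) (b::nat \<Rightarrow> real). (\<forall>i<n. 0 \<le> a i \<and> a i \<le> b i \<and> b i \<le> T) \<and>
        (\<forall>i<n. \<forall>j<n. i \<noteq> j \<longrightarrow> b i \<le> a j \<or> b j \<le> a i) \<and>
        (\<Sum>i<n. b i - a i) < d
        \<longrightarrow> (\<Sum>i<n. \<bar>f (b i) - f (a i)\<bar>) < e)" using X by (rule exE)
  have d: "d > 0" using dH by blast
  have H: "\<forall>(n::nat) (a::nat \<Rightarrow> real) (b::nat \<Rightarrow> real). (\<forall>i<n. 0 \<le> a i \<and> a i \<le> b i \<and> b i \<le> T) \<and>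
        (\<forall>i<n. \<forall>j<n. i \<noteq> j \<longrightarrow> b i \<le> a j \<or> b j \<le> a i) \<and>
        (\<Sum>i<n. b i - a i) < d
        \<longrightarrow> (\<Sum>i<n. \<bar>f (b i) - f (a i)\<bar>) < e" using dH by blast
  show "\<exists>d>0. \<forall>x'\<in>{0..T}. dist x' x < d \<longrightarrow> dist (f x') (f x) < e"
  proof (intro exI[of _ d] conjI ballI impI d)
    fix y assume y: "y \<in> {0..T}" and dy: "dist y x < d"
    have s1: "(\<Sum>i<(1::nat). \<bar>f ((\<lambda>_. max x y) i) - f ((\<lambda>_. min x y) i)\<bar>) = \<bar>f (max x y) - f (min x y)\<bar>"
      by simp
    have s2: "(\<Sum>i<(1::nat). (\<lambda>_. max x y) i - (\<lambda>_. min x y) i) = max x y - min x y"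
      by simp
    have len: "max x y - min x y < d" using dy by (simp add: dist_real_def abs_real_def max_def min_def split: if_splits)
    have P: "(\<forall>i<(1::nat). 0 \<le> min x y \<and> min x y \<le> max x y \<and> max x y \<le> T) \<and>
        (\<forall>i<(1::nat). \<forall>j<(1::nat). i \<noteq> j \<longrightarrow> max x y \<le> min x y \<or> max x y \<le> min x y) \<and>
        (\<Sum>i<(1::nat). max x y - min x y) < d"
      using x y s2 len by auto
    have "(\<Sum>i<(1::nat). \<bar>f ((\<lambda>_. max x y) i) - f ((\<lambda>_. min x y) i)\<bar>) < e"
      by (rule H[rule_format, of 1 "\<lambda>_. min x y" "\<lambda>_. max x y", OF P])
    hence "\<bar>f (max x y) - f (min x y)\<bar> < e" using s1 by simp
    thus "dist (f y) (f x) < e"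
      by (cases "x \<le> y") (simp_all add: dist_real_def max_def min_def abs_minus_commute)
  qed
qed

theorem corollary2p3:
  fixes a :: real and \<phi> :: "real \<Rightarrow> real"
  assumes "a > 0"
    and "cadlag \<phi>"
    and "\<And>T. T \<ge> 0 \<Longrightarrow> abs_cont_on 0 T \<phi>"
  shows "\<forall>T\<ge>0. abs_cont_on 0 T (Lambda a \<phi>)"
proof (intro allI impI)
  fix T :: real assume T: "T \<ge> 0"
  have cont: "continuous_on {0..T} \<phi>" using ac_cont assms(3)[OF T] by blast
  show "abs_cont_on 0 T (Lambda a \<phi>)"
    unfolding abs_cont_on_def
  proof (intro allI impI)
    fix e :: real assume e: "e > 0"
    have X: "\<exists>d>0. \<forall>(n::nat) (a::nat \<Rightarrow> real) (b::nat \<Rightarrow> real). (\<forall>i<n. 0 \<le> a i \<and> a i \<le> b i \<and> b i \<le> T) \<and>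
        (\<forall>i<n. \<forall>j<n. i \<noteq> j \<longrightarrow> b i \<le> a j \<or> b j \<le> a i) \<and>
        (\<Sum>i<n. b i - a i) < d
        \<longrightarrow> (\<Sum>i<n. \<bar>\<phi> (b i) - \<phi> (a i)\<bar>) < e/2"
      using mp[OF spec[OF assms(3)[OF T, unfolded abs_cont_on_def], of "e/2"] half_gt_zero[OF e]] .
    obtain d where dH: "d > 0 \<and> (\<forall>(n::nat) (a::nat \<Rightarrow> real) (b::nat \<Rightarrow> real). (\<forall>i<n. 0 \<le> a i \<and> a i \<le> b i \<and> b i \<le> T) \<and>
        (\<forall>i<n. \<forall>j<n. i \<noteq> j \<longrightarrow> b i \<le> a j \<or> b j \<le> a i) \<and>
        (\<Sum>i<n. b i - a i) < d
        \<longrightarrow> (\<Sum>i<n. \<bar>\<phi> (b i) - \<phi> (a i)\<bar>) < e/2)" using X by (rule exE)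
    have d: "d > 0" using dH by blast
    have H: "\<forall>(n::nat) (a::nat \<Rightarrow> real) (b::nat \<Rightarrow> real). (\<forall>i<n. 0 \<le> a i \<and> a i \<le> b i \<and> b i \<le> T) \<and>
        (\<forall>i<n. \<forall>j<n. i \<noteq> j \<longrightarrow> b i \<le> a j \<or> b j \<le> a i) \<and>
        (\<Sum>i<n. b i - a i) < d
        \<longrightarrow> (\<Sum>i<n. \<bar>\<phi> (b i) - \<phi> (a i)\<bar>) < e/2" using dH by blast
    show "\<exists>d>0. \<forall>(n::nat) (p::nat \<Rightarrow> real) (q::nat \<Rightarrow> real). (\<forall>i<n. 0 \<le> p i \<and> p i \<le> q i \<and> q i \<le> T) \<and>
        (\<forall>i<n. \<forall>j<n. i \<noteq> j \<longrightarrow> q i \<le> p j \<or> q j \<le> p i) \<and>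
        (\<Sum>i<n. q i - p i) < d \<longrightarrow>
        (\<Sum>i<n. \<bar>Lambda a \<phi> (q i) - Lambda a \<phi> (p i)\<bar>) < e"
    proof (intro exI[of _ d] conjI allI impI d)
      fix n :: nat and p q :: "nat \<Rightarrow> real"
      assume A: "(\<forall>i<n. 0 \<le> p i \<and> p i \<le> q i \<and> q i \<le> T) \<and>
        (\<forall>i<n. \<forall>j<n. i \<noteq> j \<longrightarrow> q i \<le> p j \<or> q j \<le> p i) \<and>
        (\<Sum>i<n. q i - p i) < d"
      have ex: "\<exists>u v. u \<in> {p i..q i} \<and> v \<in> {p i..q i} \<and>
                 (\<forall>x\<in>{p i..q i}. \<phi> v \<le> \<phi> x \<and> \<phi> x \<le> \<phi> u)" if i: "i < n" for i
      proof -
        have c: "continuous_on {p i..q i} \<phi>"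
          using A i by (intro continuous_on_subset[OF cont]) auto
        have ne: "{p i..q i} \<noteq> {}" using A i by auto
        obtain u where "u \<in> {p i..q i}" "\<forall>x\<in>{p i..q i}. \<phi> x \<le> \<phi> u"
          using continuous_attains_sup[OF compact_Icc ne c] by blast
        moreover obtain v where "v \<in> {p i..q i}" "\<forall>x\<in>{p i..q i}. \<phi> v \<le> \<phi> x"
          using continuous_attains_inf[OF compact_Icc ne c] by blast
        ultimately show ?thesis by blast
      qed
      then obtain u v where uv: "\<And>i. i < n \<Longrightarrow> u i \<in> {p i..q i} \<and> v i \<in> {p i..q i} \<and>
                 (\<forall>x\<in>{p i..q i}. \<phi> (v i) \<le> \<phi> x \<and> \<phi> x \<le> \<phi> (u i))"
        by metis
      define p' where "p' i = min (u i) (v i)" for i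
      define q' where "q' i = max (u i) (v i)" for i
      have "(\<Sum>i<n. \<bar>\<phi> (q' i) - \<phi> (p' i)\<bar>) < e/2"
      proof (rule H[rule_format], intro conjI allI impI)
        fix i assume i: "i < n"
        show "0 \<le> p' i" "p' i \<le> q' i" "q' i \<le> T" using uv[OF i] A i
          unfolding p'_def q'_def by auto
      next
        fix i j assume i: "i < n" and j: "j < n" and ij: "i \<noteq> j"
        have "q i \<le> p j \<or> q j \<le> p i" using A i j ij by auto
        then show "q' i \<le> p' j \<or> q' j \<le> p' i" using uv[OF i] uv[OF j]
          unfolding p'_def q'_def by auto
      next
        have "(\<Sum>i<n. q' i - p' i) \<le> (\<Sum>i<n. q i - p i)"
        proof (rule sum_mono)
          fix i assume "i \<in> {..<n}"
          then have "u i \<in> {p i..q i}" "v i \<in> {p i..q i}" using uv by auto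
          then show "q' i - p' i \<le> q i - p i" unfolding p'_def q'_def by auto
        qed
        thus "(\<Sum>i<n. q' i - p' i) < d" using A by linarith
      qed
      moreover have "\<bar>\<phi> (q' i) - \<phi> (p' i)\<bar> = \<phi> (u i) - \<phi> (v i)" if i: "i < n" for i
        using uv[OF i] unfolding p'_def q'_def by (auto simp: min_def max_def)
      ultimately have S: "(\<Sum>i<n. \<phi> (u i) - \<phi> (v i)) < e/2" by simp
      have "(\<Sum>i<n. \<bar>Lambda a \<phi> (q i) - Lambda a \<phi> (p i)\<bar>) \<le> (\<Sum>i<n. 2 * (\<phi> (u i) - \<phi> (v i)))"
      proof (rule sum_mono)
        fix i assume "i \<in> {..<n}"
        hence i: "i < n" by simp
        show "\<bar>Lambda a \<phi> (q i) - Lambda a \<phi> (p i)\<bar> \<le> 2 * (\<phi> (u i) - \<phi> (v i))"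
        proof (rule Lambda_diff)
          show "continuous_on {0..q i} \<phi>" using A i by (intro continuous_on_subset[OF cont]) auto
          show "0 \<le> p i" "p i \<le> q i" using A i by auto
          show "\<forall>x\<in>{p i..q i}. \<forall>y\<in>{p i..q i}. \<bar>\<phi> x - \<phi> y\<bar> \<le> \<phi> (u i) - \<phi> (v i)"
            proof (intro ballI)
            fix x y assume xy: "x \<in> {p i..q i}" "y \<in> {p i..q i}"
            have "\<phi> (v i) \<le> \<phi> x" "\<phi> x \<le> \<phi> (u i)" "\<phi> (v i) \<le> \<phi> y" "\<phi> y \<le> \<phi> (u i)"
              using uv[OF i] xy by auto
            then show "\<bar>\<phi> x - \<phi> y\<bar> \<le> \<phi> (u i) - \<phi> (v i)" unfolding abs_le_iff by linarith
          qed
        qed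
      qed
      also have "\<dots> = 2 * (\<Sum>i<n. \<phi> (u i) - \<phi> (v i))" by (simp add: sum_distrib_left)
      finally show "(\<Sum>i<n. \<bar>Lambda a \<phi> (q i) - Lambda a \<phi> (p i)\<bar>) < e" using S by linarith
    qed
  qed
qed

end
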